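(* Let $\mathcal P$ be a Fitting program over a bilattice $\mathcal B$ and $\alpha\in\{\mathcal F,\mathcal T,\mathcal U,\mathcal I\}$. Then $\Psi'^{\alpha}_{\mathcal P}$ has a least fixpoint, denoted $Fix^{\alpha}_{\mathcal U}$, and a greatest fixpoint, denoted $Fix^{\alpha}_{\mathcal I}$, with respect to the knowledge ordering $\le_k$ on $\mathcal V(\mathcal B)$.
   Context: A bilattice $\langle\mathcal B,\le_t,\le_k\rangle$ is a nonempty set with two partial orders, each making $\mathcal B$ a lattice with top and bottom. Under $\le_t$, meet and join are $\wedge,\vee$ (infinitary $\bigwedge,\bigvee$), bottom $\mathcal F$, top $\mathcal T$; under $\le_k$, meet and join are $\otimes,\oplus$ (infinitary $\bigotimes,\bigoplus$), bottom $\mathcal U$, top $\mathcal I$. Standing assumptions: $\mathcal B$ is complete for both orders, infinitely distributive, satisfies the infinitary interlacing conditions (each of $\wedge,\vee,\otimes,\oplus$ and their infinitary versions is monotone w.r.t. both orderings), and has a negation $\neg$ (an involution reversing $\le_t$ and preserving $\le_k$). A formula is built from literals ($A$ or $\neg A$) and elements of $\mathcal B$ using $\wedge,\vee,\otimes,\oplus,\exists,\forall$ (with built-in predicate $equal$). A clause is $P(x_1,\dots,x_n)\leftarrow\phi(x_1,\dots,x_n)$ with the body's free variables among $x_1,\dots,x_n$. A Fitting program is a finite set of clauses with no predicate letter heading more than one clause; Inst-$\mathcal P$ is its set of ground instances. $\mathcal V(\mathcal B)$: maps from ground atoms to $\mathcal B$, with pointwise orders/operations. Valuations extend to closed formulas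 compositionally ($v(\beta)=\beta$, connectives pointwise, $\exists$ as $\bigvee$, $\forall$ as $\bigwedge$ over closed-term instances, $v(equal(s,t))=\mathcal T$ if $s=t$ else $\mathcal F$). The contrajoin $v\bigtriangleup w$ evaluates likewise but gives $A$ the value $v(A)$ and $\neg A$ the value $\neg w(A)$. $\Psi_{\mathcal P}^{\alpha}(v,w)(A)=\alpha$ if $A$ heads no member of Inst-$\mathcal P$, and $=(v\bigtriangleup w)(B)$ if $A\leftarrow B\in$ Inst-$\mathcal P$. With $v_\alpha$ the constant valuation $\alpha$, $\Psi'^{\alpha}_{\mathcal P}(v)$ is the limit of $a_0=v_\alpha$, $a_{n+1}=\Psi_{\mathcal P}^{\alpha}(a_n,v)$, $a_\lambda=\bigvee_{n<\lambda}$ (resp. $\bigwedge,\bigoplus,\bigotimes$) of $\Psi_{\mathcal P}^{\alpha}(a_n,v)$ for limit $\lambda$ when $\alpha=\mathcal F$ (resp. $\mathcal T,\mathcal U,\mathcal I$); equivalently the $\le_t$-least (resp. $\le_t$-greatest, $\le_k$-least, $\le_k$-greatest) fixpoint of $x\mapsto\Psi_{\mathcal P}^{\alpha}(x,v)$. *)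

theory Defs
  imports Main
begin

record 'b bilat =
  leqt :: "'b \<Rightarrow> 'b \<Rightarrow> bool"
  leqk :: "'b \<Rightarrow> 'b \<Rightarrow> bool"
  bneg :: "'b \<Rightarrow> 'b"

definition is_lub :: "('b \<Rightarrow> 'b \<Rightarrow> bool) \<Rightarrow> 'b set \<Rightarrow> 'b \<Rightarrow> bool" where
  "is_lub le A s \<longleftrightarrow> (\<forall>a\<in>A. le a s) \<and> (\<forall>u. (\<forall>a\<in>A. le a u) \<longrightarrow> le s u)"

definition is_glb :: "('b \<Rightarrow> 'b \<Rightarrow> bool) \<Rightarrow> 'b set \<Rightarrow> 'b \<Rightarrow> bool" where
  "is_glb le A s \<longleftrightarrow> (\<forall>a\<in>A. le s a) \<and> (\<forall>u. (\<forall>a\<in>A. le u a) \<longrightarrow> le u s)"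

definition Lub :: "('b \<Rightarrow> 'b \<Rightarrow> bool) \<Rightarrow> 'b set \<Rightarrow> 'b" where
  "Lub le A = (THE s. is_lub le A s)"

definition Glb :: "('b \<Rightarrow> 'b \<Rightarrow> bool) \<Rightarrow> 'b set \<Rightarrow> 'b" where
  "Glb le A = (THE s. is_glb le A s)"

definition porder :: "('b \<Rightarrow> 'b \<Rightarrow> bool) \<Rightarrow> bool" where
  "porder le \<longleftrightarrow> (\<forall>a. le a a) \<and> (\<forall>a b. le a b \<and> le b a \<longrightarrow> a = b)
     \<and> (\<forall>a b c. le a b \<and> le b c \<longrightarrow> le a c)"

definition tMeet :: "('b, 'z) bilat_scheme \<Rightarrow> 'b set \<Rightarrow> 'b" where "tMeet B A = Glb (leqt B) A"
definition tJoin :: "('b, 'z) bilat_scheme \<Rightarrow> 'b set \<Rightarrow> 'b" where "tJoin B A = Lub (leqt B) A"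
definition kMeet :: "('b, 'z) bilat_scheme \<Rightarrow> 'b set \<Rightarrow> 'b" where "kMeet B A = Glb (leqk B) A"
definition kJoin :: "('b, 'z) bilat_scheme \<Rightarrow> 'b set \<Rightarrow> 'b" where "kJoin B A = Lub (leqk B) A"

definition tand :: "('b, 'z) bilat_scheme \<Rightarrow> 'b \<Rightarrow> 'b \<Rightarrow> 'b" where "tand B a b = tMeet B {a, b}"
definition tor :: "('b, 'z) bilat_scheme \<Rightarrow> 'b \<Rightarrow> 'b \<Rightarrow> 'b" where "tor B a b = tJoin B {a, b}"
definition kand :: "('b, 'z) bilat_scheme \<Rightarrow> 'b \<Rightarrow> 'b \<Rightarrow> 'b" where "kand B a b = kMeet B {a, b}"
definition kor :: "('b, 'z) bilat_scheme \<Rightarrow> 'b \<Rightarrow> 'b \<Rightarrow> 'b" where "kor B a b = kJoin B {a, b}"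

definition bF :: "('b, 'z) bilat_scheme \<Rightarrow> 'b" where "bF B = Glb (leqt B) UNIV"
definition bT :: "('b, 'z) bilat_scheme \<Rightarrow> 'b" where "bT B = Lub (leqt B) UNIV"
definition bU :: "('b, 'z) bilat_scheme \<Rightarrow> 'b" where "bU B = Glb (leqk B) UNIV"
definition bI :: "('b, 'z) bilat_scheme \<Rightarrow> 'b" where "bI B = Lub (leqk B) UNIV"

definition complete_order :: "('b \<Rightarrow> 'b \<Rightarrow> bool) \<Rightarrow> bool" where
  "complete_order le \<longleftrightarrow> porder le \<and> (\<forall>A. \<exists>s. is_lub le A s) \<and> (\<forall>A. \<exists>s. is_glb le A s)"

definition distrib_over :: "('b \<Rightarrow> 'b \<Rightarrow> 'b) \<Rightarrow> ('b set \<Rightarrow> 'b) \<Rightarrow> bool" where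
  "distrib_over f Q \<longleftrightarrow> (\<forall>a A. A \<noteq> {} \<longrightarrow> f a (Q A) = Q ((f a) ` A))"

definition infinitely_distributive :: "('b, 'z) bilat_scheme \<Rightarrow> bool" where
  "infinitely_distributive B \<longleftrightarrow>
     (\<forall>f\<in>{tand B, tor B, kand B, kor B}. \<forall>Q\<in>{tMeet B, tJoin B, kMeet B, kJoin B}.
        distrib_over f Q)"

text \<open>Monotonicity of binary ops and of infinitary ops (for arbitrary index families,
  encoded as a set of pairs (a_i, b_i)).\<close>
definition bin_mono :: "('b \<Rightarrow> 'b \<Rightarrow> bool) \<Rightarrow> ('b \<Rightarrow> 'b \<Rightarrow> 'b) \<Rightarrow> bool" where
  "bin_mono le f \<longleftrightarrow> (\<forall>a a' b b'. le a a' \<and> le b b' \<longrightarrow> le (f a b) (f a' b'))"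

definition inf_mono :: "('b \<Rightarrow> 'b \<Rightarrow> bool) \<Rightarrow> ('b set \<Rightarrow> 'b) \<Rightarrow> bool" where
  "inf_mono le Q \<longleftrightarrow> (\<forall>S. (\<forall>(a, b)\<in>S. le a b) \<longrightarrow> le (Q (fst ` S)) (Q (snd ` S)))"

definition interlaced :: "('b, 'z) bilat_scheme \<Rightarrow> bool" where
  "interlaced B \<longleftrightarrow>
     (\<forall>le\<in>{leqt B, leqk B}.
        (\<forall>f\<in>{tand B, tor B, kand B, kor B}. bin_mono le f) \<and>
        (\<forall>Q\<in>{tMeet B, tJoin B, kMeet B, kJoin B}. inf_mono le Q))"

definition is_negation :: "('b, 'z) bilat_scheme \<Rightarrow> bool" where
  "is_negation B \<longleftrightarrow> (\<forall>a. bneg B (bneg B a) = a)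
     \<and> (\<forall>a b. leqt B a b \<longrightarrow> leqt B (bneg B b) (bneg B a))
     \<and> (\<forall>a b. leqk B a b \<longrightarrow> leqk B (bneg B a) (bneg B b))"

text \<open>Standing assumptions: complete, infinitely distributive, infinitarily interlaced
  bilattice with negation (the carrier is the whole (nonempty) type 'b).\<close>
definition bilattice :: "('b, 'z) bilat_scheme \<Rightarrow> bool" where
  "bilattice B \<longleftrightarrow> complete_order (leqt B) \<and> complete_order (leqk B)
     \<and> infinitely_distributive B \<and> interlaced B \<and> is_negation B"

datatype ('f, 'v) trm = Var 'v | Fn 'f "('f, 'v) trm list"

datatype 'f gterm = GFn 'f "'f gterm list"

datatype ('b, 'p, 'f, 'v) form =
    Pos 'p "('f, 'v) trm list"
  | Neg 'p "('f, 'v) trm list"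
  | Cst 'b
  | Equal "('f, 'v) trm" "('f, 'v) trm"
  | And "('b, 'p, 'f, 'v) form" "('b, 'p, 'f, 'v) form"
  | Or "('b, 'p, 'f, 'v) form" "('b, 'p, 'f, 'v) form"
  | Otimes "('b, 'p, 'f, 'v) form" "('b, 'p, 'f, 'v) form"
  | Oplus "('b, 'p, 'f, 'v) form" "('b, 'p, 'f, 'v) form"
  | Ex 'v "('b, 'p, 'f, 'v) form"
  | All 'v "('b, 'p, 'f, 'v) form"

fun tvars :: "('f, 'v) trm \<Rightarrow> 'v set" where
  "tvars (Var x) = {x}"
| "tvars (Fn f ts) = (\<Union>t\<in>set ts. tvars t)"

fun fv :: "('b, 'p, 'f, 'v) form \<Rightarrow> 'v set" where
  "fv (Pos p ts) = (\<Union>t\<in>set ts. tvars t)"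
| "fv (Neg p ts) = (\<Union>t\<in>set ts. tvars t)"
| "fv (Cst b) = {}"
| "fv (Equal s t) = tvars s \<union> tvars t"
| "fv (And a b) = fv a \<union> fv b"
| "fv (Or a b) = fv a \<union> fv b"
| "fv (Otimes a b) = fv a \<union> fv b"
| "fv (Oplus a b) = fv a \<union> fv b"
| "fv (Ex x a) = fv a - {x}"
| "fv (All x a) = fv a - {x}"

fun teval :: "('v \<Rightarrow> 'f gterm) \<Rightarrow> ('f, 'v) trm \<Rightarrow> 'f gterm" where
  "teval env (Var x) = env x"
| "teval env (Fn f ts) = GFn f (map (teval env) ts)"

text \<open>Ground atoms are pairs (predicate letter, list of closed terms).\<close>
type_synonym ('p, 'f, 'b) valuation = "'p \<times> 'f gterm list \<Rightarrow> 'b"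

text \<open>Contrajoin evaluation (v \<triangle> w) of a formula under an assignment of closed terms
  to variables (equivalently, evaluation of the corresponding closed instance).
  Ordinary evaluation v(phi) is the special case v \<triangle> v.\<close>
fun ceval :: "('b, 'z) bilat_scheme \<Rightarrow> ('p, 'f, 'b) valuation \<Rightarrow> ('p, 'f, 'b) valuation
    \<Rightarrow> ('v \<Rightarrow> 'f gterm) \<Rightarrow> ('b, 'p, 'f, 'v) form \<Rightarrow> 'b" where
  "ceval B v w env (Pos p ts) = v (p, map (teval env) ts)"
| "ceval B v w env (Neg p ts) = bneg B (w (p, map (teval env) ts))"
| "ceval B v w env (Cst b) = b"
| "ceval B v w env (Equal s t) = (if teval env s = teval env t then bT B else bF B)"
| "ceval B v w env (And a b) = tand B (ceval B v w env a) (ceval B v w env b)"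
| "ceval B v w env (Or a b) = tor B (ceval B v w env a) (ceval B v w env b)"
| "ceval B v w env (Otimes a b) = kand B (ceval B v w env a) (ceval B v w env b)"
| "ceval B v w env (Oplus a b) = kor B (ceval B v w env a) (ceval B v w env b)"
| "ceval B v w env (Ex x a) = tJoin B (range (\<lambda>t. ceval B v w (env(x := t)) a))"
| "ceval B v w env (All x a) = tMeet B (range (\<lambda>t. ceval B v w (env(x := t)) a))"

text \<open>A clause P(x_1,...,x_n) \<leftarrow> body is (P, [x_1,...,x_n], body).\<close>
type_synonym ('b, 'p, 'f, 'v) clause = "'p \<times> 'v list \<times> ('b, 'p, 'f, 'v) form"

definition is_clause :: "('b, 'p, 'f, 'v) clause \<Rightarrow> bool" where
  "is_clause c \<longleftrightarrow> (case c of (p, xs, body) \<Rightarrow> distinct xs \<and> fv body \<subseteq> set xs)"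

definition fitting_program :: "('b, 'p, 'f, 'v) clause set \<Rightarrow> bool" where
  "fitting_program P \<longleftrightarrow> finite P \<and> (\<forall>c\<in>P. is_clause c)
     \<and> (\<forall>c\<in>P. \<forall>d\<in>P. fst c = fst d \<longrightarrow> c = d)"

text \<open>Substitution of closed terms ts for variables xs (other variables do not occur
  free in the body, so their value is irrelevant).\<close>
definition inst_env :: "'v list \<Rightarrow> 'f gterm list \<Rightarrow> 'v \<Rightarrow> 'f gterm" where
  "inst_env xs ts y = (case map_of (zip xs ts) y of Some t \<Rightarrow> t | None \<Rightarrow> GFn undefined [])"

text \<open>Does the ground atom (p, ts) head some member of Inst-P?\<close>
definition heads :: "('b, 'p, 'f, 'v) clause set \<Rightarrow> 'p \<times> 'f gterm list \<Rightarrow> bool" where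
  "heads P A \<longleftrightarrow> (\<exists>c\<in>P. fst c = fst A \<and> length (fst (snd c)) = length (snd A))"

definition Psi :: "('b, 'z) bilat_scheme \<Rightarrow> ('b, 'p, 'f, 'v) clause set \<Rightarrow> 'b
    \<Rightarrow> ('p, 'f, 'b) valuation \<Rightarrow> ('p, 'f, 'b) valuation \<Rightarrow> ('p, 'f, 'b) valuation" where
  "Psi B P \<alpha> v w A =
     (if heads P A then
        (let c = (THE c. c \<in> P \<and> fst c = fst A)
         in ceval B v w (inst_env (fst (snd c)) (snd A)) (snd (snd c)))
      else \<alpha>)"

definition vle :: "('b \<Rightarrow> 'b \<Rightarrow> bool) \<Rightarrow> ('a \<Rightarrow> 'b) \<Rightarrow> ('a \<Rightarrow> 'b) \<Rightarrow> bool" where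
  "vle le v v' \<longleftrightarrow> (\<forall>A. le (v A) (v' A))"

definition least_fp :: "('x \<Rightarrow> 'x \<Rightarrow> bool) \<Rightarrow> ('x \<Rightarrow> 'x) \<Rightarrow> 'x" where
  "least_fp le f = (THE x. f x = x \<and> (\<forall>y. f y = y \<longrightarrow> le x y))"

definition greatest_fp :: "('x \<Rightarrow> 'x \<Rightarrow> bool) \<Rightarrow> ('x \<Rightarrow> 'x) \<Rightarrow> 'x" where
  "greatest_fp le f = (THE x. f x = x \<and> (\<forall>y. f y = y \<longrightarrow> le y x))"

definition Psi' :: "('b, 'z) bilat_scheme \<Rightarrow> ('b, 'p, 'f, 'v) clause set \<Rightarrow> 'b
    \<Rightarrow> ('p, 'f, 'b) valuation \<Rightarrow> ('p, 'f, 'b) valuation" where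
  "Psi' B P \<alpha> v =
     (if \<alpha> = bF B then least_fp (vle (leqt B)) (\<lambda>x. Psi B P \<alpha> x v)
      else if \<alpha> = bT B then greatest_fp (vle (leqt B)) (\<lambda>x. Psi B P \<alpha> x v)
      else if \<alpha> = bU B then least_fp (vle (leqk B)) (\<lambda>x. Psi B P \<alpha> x v)
      else greatest_fp (vle (leqk B)) (\<lambda>x. Psi B P \<alpha> x v))"

end

theory Submission
  imports Defs
begin

definition monle :: "('x \<Rightarrow> 'x \<Rightarrow> bool) \<Rightarrow> ('x \<Rightarrow> 'x) \<Rightarrow> bool" where
  "monle le f \<longleftrightarrow> (\<forall>x y. le x y \<longrightarrow> le (f x) (f y))"

lemma porder_dual: "porder le \<Longrightarrow> porder (\<lambda>a b. le b a)"
  unfolding porder_def by blast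

lemma is_lub_dual: "is_lub (\<lambda>a b. le b a) A s = is_glb le A s"
  unfolding is_lub_def is_glb_def by simp

lemma is_glb_dual: "is_glb (\<lambda>a b. le b a) A s = is_lub le A s"
  unfolding is_lub_def is_glb_def by simp

lemma Lub_dual: "Lub (\<lambda>a b. le b a) = Glb le"
  by (rule ext) (simp add: Lub_def Glb_def is_lub_dual)

lemma co_dual: "complete_order le \<Longrightarrow> complete_order (\<lambda>a b. le b a)"
  unfolding complete_order_def by (metis porder_dual is_lub_dual is_glb_dual)

lemma lub_unique: "porder le \<Longrightarrow> is_lub le A s \<Longrightarrow> is_lub le A t \<Longrightarrow> s = t"
  unfolding porder_def is_lub_def by blast

lemma Lub_is: assumes co: "complete_order le" shows "is_lub le A (Lub le A)"
proof -
  from co obtain s where s: "is_lub le A s" by (auto simp: complete_order_def)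
  have po: "porder le" using co by (simp add: complete_order_def)
  have "\<exists>!s. is_lub le A s" using s lub_unique[OF po] by blast
  then show ?thesis unfolding Lub_def by (rule theI')
qed

lemma Glb_is: assumes co: "complete_order le" shows "is_glb le A (Glb le A)"
  using Lub_is[OF co_dual[OF co], of A] by (simp add: is_lub_dual Lub_dual)

lemma lub_eq: "complete_order le \<Longrightarrow> is_lub le A s \<Longrightarrow> Lub le A = s"
  using Lub_is lub_unique by (metis complete_order_def)

lemma glb_eq: assumes co: "complete_order le" and g: "is_glb le A s" shows "Glb le A = s"
proof -
  have "is_lub (\<lambda>a b. le b a) A s" using g is_lub_dual by metis
  then have "Lub (\<lambda>a b. le b a) A = s" by (rule lub_eq[OF co_dual[OF co]])
  then show ?thesis unfolding Lub_dual .
qed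

lemma kt:
  assumes co: "complete_order le" and mo: "monle le f"
  shows "f (least_fp le f) = least_fp le f" "\<And>y. le (f y) y \<Longrightarrow> le (least_fp le f) y"
proof -
  have po: "porder le" using co by (simp add: complete_order_def)
  define m where "m = Glb le {x. le (f x) x}"
  have g: "is_glb le {x. le (f x) x} m" using Glb_is[OF co] m_def by simp
  have lower: "\<And>y. le (f y) y \<Longrightarrow> le m y" using g unfolding is_glb_def by blast
  have "\<And>y. le (f y) y \<Longrightarrow> le (f m) y"
  proof -
    fix y assume y: "le (f y) y"
    have "le (f m) (f y)" using mo lower[OF y] by (simp add: monle_def)
    then show "le (f m) y" using y po unfolding porder_def by blast
  qed
  then have fm: "le (f m) m" using g unfolding is_glb_def by blast
  then have "le (f (f m)) (f m)" using mo by (simp add: monle_def)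
  then have "le m (f m)" using lower by blast
  then have fxm: "f m = m" using fm po unfolding porder_def by blast
  have refl: "\<And>a. le a a" using po by (simp add: porder_def)
  have eq: "least_fp le f = m" unfolding least_fp_def
  proof (rule the_equality)
    show "f m = m \<and> (\<forall>y. f y = y \<longrightarrow> le m y)" using fxm lower refl by metis
  next
    fix x assume x: "f x = x \<and> (\<forall>y. f y = y \<longrightarrow> le x y)"
    then have "le x m" using fxm by blast
    moreover have "le m x" using x lower refl by metis
    ultimately show "x = m" using po unfolding porder_def by blast
  qed
  show "f (least_fp le f) = least_fp le f" using eq fxm by simp
  show "\<And>y. le (f y) y \<Longrightarrow> le (least_fp le f) y" using eq lower by simp
qed

lemma vle_porder: "porder le \<Longrightarrow> porder (vle le)"
  unfolding porder_def vle_def by (metis ext)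

lemma vle_lub: "complete_order le \<Longrightarrow> is_lub (vle le) S (\<lambda>A. Lub le ((\<lambda>x. x A) ` S))"
  using Lub_is unfolding is_lub_def vle_def by fastforce

lemma vle_glb: "complete_order le \<Longrightarrow> is_glb (vle le) S (\<lambda>A. Glb le ((\<lambda>x. x A) ` S))"
  using Glb_is unfolding is_glb_def vle_def by fastforce

lemma vle_co: "complete_order le \<Longrightarrow> complete_order (vle le)"
  using vle_porder vle_lub vle_glb unfolding complete_order_def by blast

lemma vLub: "complete_order le \<Longrightarrow> Lub (vle le) S = (\<lambda>A. Lub le ((\<lambda>x. x A) ` S))"
  by (rule lub_eq[OF vle_co vle_lub])

lemma vGlb: "complete_order le \<Longrightarrow> Glb (vle le) S = (\<lambda>A. Glb le ((\<lambda>x. x A) ` S))"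
  by (rule glb_eq[OF vle_co vle_glb])

lemma lift_inf_mono:
  assumes im: "inf_mono lk Q" and S: "\<forall>(a,b)\<in>S. vle lk a b"
  shows "vle lk (\<lambda>A. Q ((\<lambda>x. x A) ` fst ` S)) (\<lambda>A. Q ((\<lambda>x. x A) ` snd ` S))"
  unfolding vle_def
proof
  fix A
  define S' where "S' = (\<lambda>p. (fst p A, snd p A)) ` S"
  have "\<forall>(a,b)\<in>S'. lk a b" using S unfolding S'_def vle_def by auto
  then have "lk (Q (fst ` S')) (Q (snd ` S'))" using im unfolding inf_mono_def by blast
  moreover have "fst ` S' = (\<lambda>x. x A) ` fst ` S" "snd ` S' = (\<lambda>x. x A) ` snd ` S"
    unfolding S'_def by (simp_all add: image_image)
  ultimately show "lk (Q ((\<lambda>x. x A) ` fst ` S)) (Q ((\<lambda>x. x A) ` snd ` S))" by simp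
qed

inductive pr :: "('x \<Rightarrow> 'x \<Rightarrow> bool) \<Rightarrow> ('x \<Rightarrow> 'x) \<Rightarrow> ('x \<Rightarrow> 'x) \<Rightarrow> ('x \<times> 'x) \<Rightarrow> bool"
  for le f f' where
  stp: "pr le f f' (x, y) \<Longrightarrow> pr le f f' (f x, f' y)"
| jn: "(\<And>p. p \<in> S \<Longrightarrow> pr le f f' p) \<Longrightarrow> pr le f f' (Lub le (fst ` S), Lub le (snd ` S))"

lemma pair_lfp:
  assumes co: "complete_order le" and m1: "monle le f" and m2: "monle le f'"
    and st: "\<And>x y. lk x y \<Longrightarrow> lk (f x) (f' y)"
    and jo: "\<And>S. \<forall>(a,b)\<in>S. lk a b \<Longrightarrow> lk (Lub le (fst ` S)) (Lub le (snd ` S))"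
  shows "lk (least_fp le f) (least_fp le f')"
proof -
  have po: "porder le" using co by (simp add: complete_order_def)
  let ?T = "Collect (pr le f f')"
  let ?m = "least_fp le f" and ?m' = "least_fp le f'"
  have A: "pr le f f' p \<Longrightarrow> lk (fst p) (snd p)" for p
  proof (induction rule: pr.induct)
    case (stp x y) then show ?case using st by simp
  next
    case (jn S) then show ?case using jo[of S] by fastforce
  qed
  have fm: "f ?m = ?m" by (rule kt(1)[OF co m1])
  have fm': "f' ?m' = ?m'" by (rule kt(1)[OF co m2])
  have B: "pr le f f' p \<Longrightarrow> le (fst p) ?m \<and> le (snd p) ?m'" for p
  proof (induction rule: pr.induct)
    case (stp x y)
    have "le (f x) (f ?m)" "le (f' y) (f' ?m')" using stp.IH m1 m2 unfolding monle_def by auto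
    then show ?case using fm fm' by simp
  next
    case (jn S)
    have "\<forall>a\<in>fst ` S. le a ?m" "\<forall>a\<in>snd ` S. le a ?m'" using jn.IH by auto
    then have "le (Lub le (fst ` S)) ?m" "le (Lub le (snd ` S)) ?m'"
      using Lub_is[OF co, of "fst ` S"] Lub_is[OF co, of "snd ` S"] unfolding is_lub_def by blast+
    then show ?case by simp
  qed
  define J where "J = Lub le (fst ` ?T)"
  define J' where "J' = Lub le (snd ` ?T)"
  have JT: "pr le f f' (J, J')" unfolding J_def J'_def by (rule pr.jn) simp
  then have "pr le f f' (f J, f' J')" by (rule pr.stp)
  then have "f J \<in> fst ` ?T" "f' J' \<in> snd ` ?T" by (metis fst_conv snd_conv image_eqI mem_Collect_eq)+
  then have "le (f J) J" "le (f' J') J'"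
    using Lub_is[OF co, of "fst ` ?T"] Lub_is[OF co, of "snd ` ?T"] unfolding J_def J'_def is_lub_def
    by blast+
  then have "le ?m J" "le ?m' J'" using kt(2)[OF co m1] kt(2)[OF co m2] by blast+
  moreover have "le J ?m" "le J' ?m'" using B[OF JT] by auto
  ultimately have "J = ?m" "J' = ?m'" using po unfolding porder_def by blast+
  then show ?thesis using A[OF JT] by simp
qed

lemma co_t: "bilattice B \<Longrightarrow> complete_order (leqt B)" by (simp add: bilattice_def)
lemma co_k: "bilattice B \<Longrightarrow> complete_order (leqk B)" by (simp add: bilattice_def)

lemma rng_mono:
  assumes im: "inf_mono le Q" and h: "\<And>t. le (g t) (g' t)"
  shows "le (Q (range g)) (Q (range g'))"
proof -
  let ?S = "range (\<lambda>t. (g t, g' t))"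
  have "\<forall>(a,b)\<in>?S. le a b" using h by auto
  then have "le (Q (fst ` ?S)) (Q (snd ` ?S))" using im unfolding inf_mono_def by blast
  moreover have "fst ` ?S = range g" "snd ` ?S = range g'" by (simp_all add: image_image)
  ultimately show ?thesis by simp
qed

lemma ceval_mono:
  assumes bl: "bilattice B" and le: "le \<in> {leqt B, leqk B}"
    and v: "vle le v v'" and w: "\<forall>A. le (bneg B (w A)) (bneg B (w' A))"
  shows "le (ceval B v w env \<phi>) (ceval B v' w' env \<phi>)"
proof -
  have co: "complete_order le" using le bl by (auto simp: bilattice_def)
  have refl: "\<And>a. le a a" using co by (simp add: complete_order_def porder_def)
  have il: "interlaced B" using bl by (simp add: bilattice_def)
  have ilc: "(\<forall>f\<in>{tand B, tor B, kand B, kor B}. bin_mono le f) \<and>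
        (\<forall>Q\<in>{tMeet B, tJoin B, kMeet B, kJoin B}. inf_mono le Q)"
    using il le unfolding interlaced_def by (rule bspec)
  have bm: "bin_mono le (tand B)" "bin_mono le (tor B)" "bin_mono le (kand B)" "bin_mono le (kor B)"
    by (rule bspec[OF conjunct1[OF ilc]], blast)+
  have im: "inf_mono le (tJoin B)" "inf_mono le (tMeet B)"
    by (rule bspec[OF conjunct2[OF ilc]], blast)+
  note rng = rng_mono[OF im(1)] rng_mono[OF im(2)]
  show ?thesis
  proof (induction \<phi> arbitrary: env)
    case (Pos p ts) then show ?case using v by (simp add: vle_def)
  next
    case (Neg p ts) then show ?case using w by simp
  next
    case (Cst b) then show ?case using refl by simp
  next
    case (Equal s t) then show ?case using refl by simp
  next
    case (And a b) then show ?case using bm(1) by (simp add: bin_mono_def)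
  next
    case (Or a b) then show ?case using bm(2) by (simp add: bin_mono_def)
  next
    case (Otimes a b) then show ?case using bm(3) by (simp add: bin_mono_def)
  next
    case (Oplus a b) then show ?case using bm(4) by (simp add: bin_mono_def)
  next
    case (Ex x a) show ?case by simp (rule rng(1), rule Ex.IH)
  next
    case (All x a) show ?case by simp (rule rng(2), rule All.IH)
  qed
qed

lemma Psi_mono:
  assumes bl: "bilattice B" and le: "le \<in> {leqt B, leqk B}"
    and v: "vle le v v'" and w: "\<forall>A. le (bneg B (w A)) (bneg B (w' A))"
  shows "vle le (Psi B P \<alpha> v w) (Psi B P \<alpha> v' w')"
proof -
  have co: "complete_order le" using le bl by (auto simp: bilattice_def)
  have refl: "\<And>a. le a a" using co by (simp add: complete_order_def porder_def)
  have c: "\<And>env \<phi>. le (ceval B v w env \<phi>) (ceval B v' w' env \<phi>)"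
    by (rule ceval_mono[OF bl le v w])
  show ?thesis unfolding vle_def
  proof
    fix A
    show "le (Psi B P \<alpha> v w A) (Psi B P \<alpha> v' w' A)"
      unfolding Psi_def Let_def by (cases "heads P A") (simp only: if_True if_False c refl)+
  qed
qed

lemma neg_k: assumes bl: "bilattice B" and vv: "vle (leqk B) v v'"
  shows "\<forall>A. leqk B (bneg B (v A)) (bneg B (v' A))"
proof -
  have "is_negation B" using bl unfolding bilattice_def by blast
  then show ?thesis using vv unfolding is_negation_def vle_def by blast
qed

lemma neg_refl: assumes bl: "bilattice B" and le: "le \<in> {leqt B, leqk B}"
  shows "\<forall>A. le (bneg B (v A)) (bneg B (v A))"
proof -
  have co: "complete_order le" using le bl by (auto simp: bilattice_def)
  then have "porder le" unfolding complete_order_def by blast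
  then show ?thesis unfolding porder_def by blast
qed

lemma gd: "greatest_fp (vle le) f = least_fp (vle (\<lambda>a b. le b a)) f"
  unfolding greatest_fp_def least_fp_def vle_def by simp

lemma fp_mono:
  assumes bl: "bilattice B" and le: "le \<in> {leqt B, leqk B}" and vv: "vle (leqk B) v v'"
  shows "vle (leqk B) (least_fp (vle le) (\<lambda>x. Psi B P \<alpha> x v)) (least_fp (vle le) (\<lambda>x. Psi B P \<alpha> x v'))"
    "vle (leqk B) (greatest_fp (vle le) (\<lambda>x. Psi B P \<alpha> x v)) (greatest_fp (vle le) (\<lambda>x. Psi B P \<alpha> x v'))"
proof -
  have co: "complete_order le" using le bl by (auto simp: bilattice_def)
  have il: "interlaced B" using bl by (simp add: bilattice_def)
  have ilk: "(\<forall>f\<in>{tand B, tor B, kand B, kor B}. bin_mono (leqk B) f) \<and>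
        (\<forall>Q\<in>{tMeet B, tJoin B, kMeet B, kJoin B}. inf_mono (leqk B) Q)"
    using il unfolding interlaced_def by (rule bspec) blast
  have e: "tJoin B = Lub (leqt B)" "kJoin B = Lub (leqk B)" "tMeet B = Glb (leqt B)" "kMeet B = Glb (leqk B)"
    by (simp_all add: fun_eq_iff tJoin_def kJoin_def tMeet_def kMeet_def)
  have Qs: "\<forall>Q\<in>{Glb (leqt B), Lub (leqt B), Glb (leqk B), Lub (leqk B)}. inf_mono (leqk B) Q"
    using conjunct2[OF ilk] unfolding e .
  have imk: "inf_mono (leqk B) (Lub le)" "inf_mono (leqk B) (Glb le)"
    using Qs le by blast+
  have mo: "monle (vle le) (\<lambda>x. Psi B P \<alpha> x u)" for u
    unfolding monle_def using Psi_mono[OF bl le _ neg_refl[OF bl le]] by blast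
  have st: "vle (leqk B) x y \<Longrightarrow> vle (leqk B) (Psi B P \<alpha> x v) (Psi B P \<alpha> y v')" for x y
    using Psi_mono[of B "leqk B" x y v v' P \<alpha>] bl neg_k[OF bl vv] by simp
  show "vle (leqk B) (least_fp (vle le) (\<lambda>x. Psi B P \<alpha> x v)) (least_fp (vle le) (\<lambda>x. Psi B P \<alpha> x v'))"
    by (rule pair_lfp[where le="vle le" and f="\<lambda>x. Psi B P \<alpha> x v" and f'="\<lambda>x. Psi B P \<alpha> x v'" and lk="vle (leqk B)", OF vle_co[OF co] mo mo])
      (erule st, unfold vLub[OF co], erule lift_inf_mono[OF imk(1)])
  have cod: "complete_order (\<lambda>a b. le b a)" by (rule co_dual[OF co])
  have mod: "monle (vle (\<lambda>a b. le b a)) (\<lambda>x. Psi B P \<alpha> x u)" for u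
    using mo[of u] unfolding monle_def vle_def by blast
  show "vle (leqk B) (greatest_fp (vle le) (\<lambda>x. Psi B P \<alpha> x v)) (greatest_fp (vle le) (\<lambda>x. Psi B P \<alpha> x v'))"
    unfolding gd
    apply (rule pair_lfp[where le="vle (\<lambda>a b. le b a)" and f="\<lambda>x. Psi B P \<alpha> x v" and f'="\<lambda>x. Psi B P \<alpha> x v'" and lk="vle (leqk B)", OF vle_co[OF cod] mod mod])
      apply (erule st)
     apply (unfold vLub[OF cod])
     apply (unfold Lub_dual)
     apply (erule lift_inf_mono[OF imk(2)])
    done
qed

lemma if_mono2: "R a a' \<Longrightarrow> R b b' \<Longrightarrow> R (if c then a else b) (if c then a' else b')"
  by simp

lemma Psi'_mono_pt:
  assumes bl: "bilattice B" and vv: "vle (leqk B) v v'"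
  shows "vle (leqk B) (Psi' B P \<alpha> v) (Psi' B P \<alpha> v')"
proof -
  have m1: "\<And>le. le \<in> {leqt B, leqk B} \<Longrightarrow> vle (leqk B) (least_fp (vle le) (\<lambda>x. Psi B P \<alpha> x v)) (least_fp (vle le) (\<lambda>x. Psi B P \<alpha> x v'))"
    by (rule fp_mono(1)[OF bl _ vv])
  have m2: "\<And>le. le \<in> {leqt B, leqk B} \<Longrightarrow> vle (leqk B) (greatest_fp (vle le) (\<lambda>x. Psi B P \<alpha> x v)) (greatest_fp (vle le) (\<lambda>x. Psi B P \<alpha> x v'))"
    by (rule fp_mono(2)[OF bl _ vv])
  have a1: "vle (leqk B) (least_fp (vle (leqt B)) (\<lambda>x. Psi B P \<alpha> x v)) (least_fp (vle (leqt B)) (\<lambda>x. Psi B P \<alpha> x v'))"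
    by (rule m1) blast
  have a2: "vle (leqk B) (greatest_fp (vle (leqt B)) (\<lambda>x. Psi B P \<alpha> x v)) (greatest_fp (vle (leqt B)) (\<lambda>x. Psi B P \<alpha> x v'))"
    by (rule m2) blast
  have a3: "vle (leqk B) (least_fp (vle (leqk B)) (\<lambda>x. Psi B P \<alpha> x v)) (least_fp (vle (leqk B)) (\<lambda>x. Psi B P \<alpha> x v'))"
    by (rule m1) blast
  have a4: "vle (leqk B) (greatest_fp (vle (leqk B)) (\<lambda>x. Psi B P \<alpha> x v)) (greatest_fp (vle (leqk B)) (\<lambda>x. Psi B P \<alpha> x v'))"
    by (rule m2) blast
  show ?thesis
    unfolding Psi'_def
    by (rule if_mono2[where R="vle (leqk B)"], fact a1, rule if_mono2[where R="vle (leqk B)"], fact a2,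
        rule if_mono2[where R="vle (leqk B)"], fact a3, fact a4)
qed

lemma Psi'_mono:
  assumes bl: "bilattice B"
  shows "monle (vle (leqk B)) (Psi' B P \<alpha>)"
  unfolding monle_def using Psi'_mono_pt[OF bl] by blast

theorem theorem2:
  fixes B :: "'b bilat"
    and P :: "('b, 'p, 'f, 'v) clause set"
    and \<alpha> :: 'b
  assumes "bilattice B"
    and "fitting_program P"
    and "\<alpha> \<in> {bF B, bT B, bU B, bI B}"
  shows "(\<exists>v. Psi' B P \<alpha> v = v \<and> (\<forall>w. Psi' B P \<alpha> w = w \<longrightarrow> vle (leqk B) v w)) \<and>
         (\<exists>v. Psi' B P \<alpha> v = v \<and> (\<forall>w. Psi' B P \<alpha> w = w \<longrightarrow> vle (leqk B) w v))"
proof -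
  let ?F = "Psi' B P \<alpha>"
  have co: "complete_order (vle (leqk B))" using vle_co co_k assms(1) by blast
  have po: "porder (vle (leqk B))" using co unfolding complete_order_def by (rule conjunct1)
  have refl: "\<And>a. vle (leqk B) a a" using po unfolding porder_def by blast
  have mo: "monle (vle (leqk B)) ?F" by (rule Psi'_mono[OF assms(1)])
  have mod: "monle (\<lambda>a b. vle (leqk B) b a) ?F" using mo unfolding monle_def by blast
  note k1 = kt[OF co mo] and k2 = kt[OF co_dual[OF co] mod]
  show ?thesis
  proof
    show "\<exists>v. ?F v = v \<and> (\<forall>w. ?F w = w \<longrightarrow> vle (leqk B) v w)"
    proof (intro exI conjI allI impI)
      show "?F (least_fp (vle (leqk B)) ?F) = least_fp (vle (leqk B)) ?F" by (rule k1(1))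
      fix w assume "?F w = w"
      then have "vle (leqk B) (?F w) w" using refl by simp
      then show "vle (leqk B) (least_fp (vle (leqk B)) ?F) w" by (rule k1(2))
    qed
    show "\<exists>v. ?F v = v \<and> (\<forall>w. ?F w = w \<longrightarrow> vle (leqk B) w v)"
    proof (intro exI conjI allI impI)
      show "?F (least_fp (\<lambda>a b. vle (leqk B) b a) ?F) = least_fp (\<lambda>a b. vle (leqk B) b a) ?F" by (rule k2(1))
      fix w assume "?F w = w"
      then have "vle (leqk B) w (?F w)" using refl by simp
      then show "vle (leqk B) w (least_fp (\<lambda>a b. vle (leqk B) b a) ?F)" by (rule k2(2))
    qed
  qed
qed

end
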